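(* Let $G$ be a connected block graph on $n$ vertices with set of cut vertices $V_c(G)$, and let $k$ be an integer with $2\le k\le n$. Then $$SW_k(G)=\sum_{v\in V_c(G)} N_k(G\setminus v) + (k-1)\binom{n}{k}.$$
   Context: A block graph is a graph in which every block (maximal connected induced subgraph without cut vertices) is a clique. For connected $G$ and $S\subseteq V(G)$, the Steiner distance $d(S)$ is the minimum number of edges of a connected subgraph of $G$ whose vertex set contains $S$, and $SW_k(G)=\sum_{S\subseteq V(G),|S|=k} d(S)$. $G\setminus v$ is the graph obtained by deleting vertex $v$. For a graph $H$ with $p>1$ connected components $H_1,\dots,H_p$, $$N_k(H)=\sum_{\substack{l_1+\cdots+l_p=k\\0\le l_1,\dots,l_p<k}}\binom{|V(H_1)|}{l_1}\cdots\binom{|V(H_p)|}{l_p},$$ i.e. the number of $k$-subsets of $V(H)$ not contained in a single component; conventions $\binom{m}{0}=1$, $\binom{m}{l}=0$ for $m<l$. *)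

theory Defs
  imports Main "HOL-Library.FuncSet"
begin

definition simple_graph :: "'a set \<Rightarrow> ('a \<Rightarrow> 'a \<Rightarrow> bool) \<Rightarrow> bool" where
  "simple_graph V E \<longleftrightarrow> finite V \<and> (\<forall>x y. E x y \<longrightarrow> E y x) \<and> (\<forall>x. \<not> E x x)
     \<and> (\<forall>x y. E x y \<longrightarrow> x \<in> V \<and> y \<in> V)"

definition reach_in :: "('a \<Rightarrow> 'a \<Rightarrow> bool) \<Rightarrow> 'a set \<Rightarrow> 'a \<Rightarrow> 'a \<Rightarrow> bool" where
  "reach_in E S = (\<lambda>a b. E a b \<and> a \<in> S \<and> b \<in> S)\<^sup>*\<^sup>*"

definition connected_on :: "('a \<Rightarrow> 'a \<Rightarrow> bool) \<Rightarrow> 'a set \<Rightarrow> bool" where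
  "connected_on E S \<longleftrightarrow> S \<noteq> {} \<and> (\<forall>x\<in>S. \<forall>y\<in>S. reach_in E S x y)"

definition components :: "('a \<Rightarrow> 'a \<Rightarrow> bool) \<Rightarrow> 'a set \<Rightarrow> 'a set set" where
  "components E S = (\<lambda>x. {y. reach_in E S x y}) ` S"

definition cut_vertex :: "('a \<Rightarrow> 'a \<Rightarrow> bool) \<Rightarrow> 'a set \<Rightarrow> 'a \<Rightarrow> bool" where
  "cut_vertex E S v \<longleftrightarrow> v \<in> S \<and> card (components E (S - {v})) > card (components E S)"

definition biconn_on :: "('a \<Rightarrow> 'a \<Rightarrow> bool) \<Rightarrow> 'a set \<Rightarrow> bool" where
  "biconn_on E S \<longleftrightarrow> connected_on E S \<and> (\<forall>v. \<not> cut_vertex E S v)"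

definition is_block :: "'a set \<Rightarrow> ('a \<Rightarrow> 'a \<Rightarrow> bool) \<Rightarrow> 'a set \<Rightarrow> bool" where
  "is_block V E B \<longleftrightarrow> B \<subseteq> V \<and> biconn_on E B \<and>
     (\<forall>T. B \<subset> T \<and> T \<subseteq> V \<longrightarrow> \<not> biconn_on E T)"

definition block_graph :: "'a set \<Rightarrow> ('a \<Rightarrow> 'a \<Rightarrow> bool) \<Rightarrow> bool" where
  "block_graph V E \<longleftrightarrow> (\<forall>B. is_block V E B \<longrightarrow> (\<forall>x\<in>B. \<forall>y\<in>B. x \<noteq> y \<longrightarrow> E x y))"

definition connected_subgraph :: "'a set \<Rightarrow> ('a \<Rightarrow> 'a \<Rightarrow> bool) \<Rightarrow> 'a set \<Rightarrow> 'a set set \<Rightarrow> bool" where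
  "connected_subgraph V E W F \<longleftrightarrow> W \<subseteq> V \<and>
     (\<forall>e\<in>F. \<exists>x y. e = {x, y} \<and> E x y \<and> x \<in> W \<and> y \<in> W) \<and>
     W \<noteq> {} \<and> (\<forall>x\<in>W. \<forall>y\<in>W. (\<lambda>a b. {a, b} \<in> F)\<^sup>*\<^sup>* x y)"

definition steiner_dist :: "'a set \<Rightarrow> ('a \<Rightarrow> 'a \<Rightarrow> bool) \<Rightarrow> 'a set \<Rightarrow> nat" where
  "steiner_dist V E S = (LEAST m. \<exists>W F. connected_subgraph V E W F \<and> S \<subseteq> W \<and> card F = m)"

definition steiner_wiener :: "nat \<Rightarrow> 'a set \<Rightarrow> ('a \<Rightarrow> 'a \<Rightarrow> bool) \<Rightarrow> nat" where
  "steiner_wiener k V E = (\<Sum>S\<in>{S. S \<subseteq> V \<and> card S = k}. steiner_dist V E S)"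

definition N_k :: "nat \<Rightarrow> ('a \<Rightarrow> 'a \<Rightarrow> bool) \<Rightarrow> 'a set \<Rightarrow> nat" where
  "N_k k E S = (\<Sum>l\<in>{l \<in> components E S \<rightarrow>\<^sub>E {0..<k}. (\<Sum>C\<in>components E S. l C) = k}.
                  \<Prod>C\<in>components E S. card C choose l C)"

end

theory Submission
  imports Defs
begin

definition gdist :: "('a \<Rightarrow> 'a \<Rightarrow> bool) \<Rightarrow> 'a \<Rightarrow> 'a \<Rightarrow> nat" where
  "gdist R a b = (LEAST n. (R ^^ n) a b)"

lemma gdist_pow: "R\<^sup>*\<^sup>* a b \<Longrightarrow> (R ^^ gdist R a b) a b"
  unfolding gdist_def by (metis LeastI_ex rtranclp_imp_relpowp)

lemma gdist_le: "(R ^^ n) a b \<Longrightarrow> gdist R a b \<le> n"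
  unfolding gdist_def by (rule Least_le)

lemma gdist_0: "R\<^sup>*\<^sup>* a b \<Longrightarrow> gdist R a b = 0 \<Longrightarrow> a = b"
  using gdist_pow by fastforce

lemma gdist_self: "gdist R a a = 0"
  using gdist_le[where R=R and n=0 and a=a and b=a] by simp

lemma gdist_tri: "R\<^sup>*\<^sup>* a c \<Longrightarrow> R\<^sup>*\<^sup>* c b \<Longrightarrow> gdist R a b \<le> gdist R a c + gdist R c b"
proof -
  assume "R\<^sup>*\<^sup>* a c" "R\<^sup>*\<^sup>* c b"
  then have "(R ^^ gdist R a c OO R ^^ gdist R c b) a b"
    using gdist_pow[OF \<open>R\<^sup>*\<^sup>* a c\<close>] gdist_pow[OF \<open>R\<^sup>*\<^sup>* c b\<close>] by blast
  then have "(R ^^ (gdist R a c + gdist R c b)) a b" by (simp add: relpowp_add)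
  then show ?thesis by (rule gdist_le)
qed

lemma gdist_one: "R a b \<Longrightarrow> gdist R a b \<le> 1"
  by (metis gdist_le relpowp_1)

lemma gdist_step_start: "R a c \<Longrightarrow> R\<^sup>*\<^sup>* c b \<Longrightarrow> gdist R a b \<le> Suc (gdist R c b)"
proof -
  assume h: "R a c" "R\<^sup>*\<^sup>* c b"
  then have "R\<^sup>*\<^sup>* a c" by blast
  then show ?thesis using gdist_tri[of R a c b] gdist_one[of R a c] h by linarith
qed

lemma gdist_step_end: "R\<^sup>*\<^sup>* a c \<Longrightarrow> R c b \<Longrightarrow> gdist R a b \<le> Suc (gdist R a c)"
proof -
  assume h: "R\<^sup>*\<^sup>* a c" "R c b"
  then have "R\<^sup>*\<^sup>* c b" by blast
  then show ?thesis using gdist_tri[of R a c b] gdist_one[of R c b] h by linarith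
qed

lemma gdist_dec_start:
  assumes "R\<^sup>*\<^sup>* a b" "a \<noteq> b"
  shows "\<exists>c. R a c \<and> R\<^sup>*\<^sup>* c b \<and> gdist R c b = gdist R a b - 1 \<and> gdist R a b > 0"
proof -
  have p: "(R ^^ gdist R a b) a b" using gdist_pow assms by metis
  have "gdist R a b \<noteq> 0" using gdist_0 assms by metis
  then obtain m where m: "gdist R a b = Suc m" by (cases "gdist R a b") auto
  with p obtain c where c: "R a c" "(R ^^ m) c b" using relpowp_Suc_D2 by metis
  have "gdist R c b \<le> m" using c gdist_le by metis
  moreover have "R\<^sup>*\<^sup>* c b" using c relpowp_imp_rtranclp by metis
  moreover have "gdist R a b \<le> Suc (gdist R c b)" using gdist_step_start c calculation by metis
  ultimately show ?thesis using c m by (intro exI[of _ c]) auto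
qed

lemma gdist_dec_end:
  assumes "R\<^sup>*\<^sup>* a b" "a \<noteq> b"
  shows "\<exists>c. R\<^sup>*\<^sup>* a c \<and> R c b \<and> gdist R a c = gdist R a b - 1 \<and> gdist R a b > 0"
proof -
  have p: "(R ^^ gdist R a b) a b" using gdist_pow assms by metis
  have "gdist R a b \<noteq> 0" using gdist_0 assms by metis
  then obtain m where m: "gdist R a b = Suc m" by (cases "gdist R a b") auto
  with p obtain c where c: "(R ^^ m) a c" "R c b" using relpowp_Suc_E by metis
  have "gdist R a c \<le> m" using c gdist_le by metis
  moreover have "R\<^sup>*\<^sup>* a c" using c relpowp_imp_rtranclp by metis
  moreover have "gdist R a b \<le> Suc (gdist R a c)" using gdist_step_end c calculation by metis
  ultimately show ?thesis using c m by (intro exI[of _ c]) auto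
qed

definition rel :: "('a \<Rightarrow> 'a \<Rightarrow> bool) \<Rightarrow> 'a set \<Rightarrow> 'a \<Rightarrow> 'a \<Rightarrow> bool" where
  "rel E A = (\<lambda>x y. E x y \<and> x \<in> A \<and> y \<in> A)"

lemma reach_rel: "reach_in E A = (rel E A)\<^sup>*\<^sup>*"
  unfolding reach_in_def rel_def by simp

lemma reach_refl[simp]: "reach_in E A x x"
  unfolding reach_in_def by simp

lemma reach_trans: "reach_in E A x y \<Longrightarrow> reach_in E A y z \<Longrightarrow> reach_in E A x z"
  unfolding reach_in_def by (rule rtranclp_trans)

lemma reach_step: "E x y \<Longrightarrow> x \<in> A \<Longrightarrow> y \<in> A \<Longrightarrow> reach_in E A x y"
  unfolding reach_in_def by (rule r_into_rtranclp) simp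

lemma reach_mono: "A \<subseteq> B \<Longrightarrow> reach_in E A x y \<Longrightarrow> reach_in E B x y"
  unfolding reach_in_def by (rule rtranclp_mono[THEN predicate2D]) auto

lemma reach_sym:
  assumes "\<forall>x y. E x y \<longrightarrow> E y x" "reach_in E A x y" shows "reach_in E A y x"
  using assms(2) unfolding reach_in_def
proof (induction rule: rtranclp_induct)
  case base then show ?case by simp
next
  case (step y z) then show ?case
    by (intro converse_rtranclp_into_rtranclp[of _ z y x]) (use assms(1) in auto)
qed

lemma reach_in_set: "reach_in E A x y \<Longrightarrow> x = y \<or> (x \<in> A \<and> y \<in> A)"
  unfolding reach_in_def by (induction rule: rtranclp_induct) auto

lemma reach_restrict:
  assumes "reach_in E A a b"
  shows "reach_in E (A \<inter> {u. reach_in E A a u}) a b"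
  using assms unfolding reach_in_def
proof (induction rule: rtranclp_induct)
  case base then show ?case by simp
next
  case (step y z)
  have z: "(\<lambda>a b. E a b \<and> a \<in> A \<and> b \<in> A)\<^sup>*\<^sup>* a z"
    using step(1,2) by (rule rtranclp.rtrancl_into_rtrancl)
  show ?case
    apply (rule rtranclp.rtrancl_into_rtrancl[OF step.IH])
    using step(1,2) z by auto
qed

lemma comp_sub: "C \<in> components E A \<Longrightarrow> C \<subseteq> A"
  unfolding components_def using reach_in_set by fastforce

lemma comp_union: "\<Union>(components E A) = A"
proof
  show "\<Union> (components E A) \<subseteq> A" using comp_sub by blast
  show "A \<subseteq> \<Union> (components E A)" unfolding components_def by force
qed

lemma comp_finite: "finite A \<Longrightarrow> finite (components E A)"
  unfolding components_def by simp

lemma comp_same: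
  assumes sym: "\<forall>x y. E x y \<longrightarrow> E y x" and "C \<in> components E A" "x \<in> C" "y \<in> C"
  shows "reach_in E A x y"
proof -
  obtain z where "C = {y. reach_in E A z y}" using assms(2) unfolding components_def by blast
  then have "reach_in E A z x" "reach_in E A z y" using assms(3,4) by auto
  then show ?thesis using reach_sym[OF sym] reach_trans by metis
qed

lemma comp_of:
  assumes sym: "\<forall>x y. E x y \<longrightarrow> E y x" and "C \<in> components E A" "x \<in> C"
  shows "C = {y. reach_in E A x y}"
proof -
  obtain z where z: "C = {y. reach_in E A z y}" using assms(2) unfolding components_def by blast
  then have "reach_in E A z x" using assms by blast
  moreover have "reach_in E A x z" using reach_sym[OF sym] calculation by blast
  ultimately show ?thesis using z reach_trans[of E A z x] reach_trans[of E A x z] by blast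
qed

lemma comp_disj:
  assumes sym: "\<forall>x y. E x y \<longrightarrow> E y x" and "C1 \<in> components E A" "C2 \<in> components E A" "C1 \<noteq> C2"
  shows "C1 \<inter> C2 = {}"
  using comp_of[OF sym] assms by blast

lemma comp_in:
  assumes "x \<in> A" shows "{y. reach_in E A x y} \<in> components E A"
  using assms unfolding components_def by blast

lemma conn_comps:
  assumes "connected_on E S"
  shows "components E S = {S}"
proof -
  have "\<And>x. x \<in> S \<Longrightarrow> {y. reach_in E S x y} = S"
    using assms reach_in_set unfolding connected_on_def by fastforce
  then show ?thesis using assms unfolding components_def connected_on_def by auto
qed

lemma noncut_reach:
  assumes "finite A" "card (components E A) \<le> 1" "x \<in> A" "y \<in> A"
  shows "reach_in E A x y"
proof (rule ccontr)
  assume n: "\<not> reach_in E A x y"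
  let ?cx = "{z. reach_in E A x z}" and ?cy = "{z. reach_in E A y z}"
  have "y \<in> ?cy" by simp
  moreover have "y \<notin> ?cx" using n by simp
  ultimately have "?cx \<noteq> ?cy" by blast
  have "{?cx, ?cy} \<subseteq> components E A" using comp_in[OF assms(3)] comp_in[OF assms(4)] by simp
  then have "card {?cx, ?cy} \<le> card (components E A)"
    by (rule card_mono[OF comp_finite[OF assms(1)]])
  then show False using \<open>?cx \<noteq> ?cy\<close> assms(2) by simp
qed

lemma single_comp_iff:
  assumes sym: "\<forall>x y. E x y \<longrightarrow> E y x" and "S \<subseteq> A" "S \<noteq> {}"
  shows "(\<exists>C\<in>components E A. S \<subseteq> C) \<longleftrightarrow> (\<forall>s1\<in>S. \<forall>s2\<in>S. reach_in E A s1 s2)"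
proof
  assume "\<exists>C\<in>components E A. S \<subseteq> C"
  then obtain C where "C \<in> components E A" "S \<subseteq> C" by blast
  then show "\<forall>s1\<in>S. \<forall>s2\<in>S. reach_in E A s1 s2" using comp_same[OF sym \<open>C \<in> components E A\<close>] by (meson subsetD)
next
  assume h: "\<forall>s1\<in>S. \<forall>s2\<in>S. reach_in E A s1 s2"
  obtain s where "s \<in> S" using assms(3) by auto
  then have "{y. reach_in E A s y} \<in> components E A"
    using assms(2) by (intro comp_in) auto
  moreover have "S \<subseteq> {y. reach_in E A s y}" using h \<open>s \<in> S\<close> by blast
  ultimately show "\<exists>C\<in>components E A. S \<subseteq> C" by blast
qed

lemma card_split:
  assumes sym: "\<forall>x y. E x y \<longrightarrow> E y x" and fin: "finite A" and "S \<subseteq> A"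
  shows "card S = (\<Sum>C\<in>components E A. card (S \<inter> C))"
proof -
  have "S = (\<Union>C\<in>components E A. S \<inter> C)" using comp_union[of E A] assms(3) by blast
  moreover have "card (\<Union>C\<in>components E A. S \<inter> C) = (\<Sum>C\<in>components E A. card (S \<inter> C))"
  proof (rule card_UN_disjoint)
    show "finite (components E A)" by (rule comp_finite[OF fin])
    show "\<forall>C\<in>components E A. finite (S \<inter> C)" using finite_subset[OF assms(3) fin] by simp
    show "\<forall>i\<in>components E A. \<forall>j\<in>components E A. i \<noteq> j \<longrightarrow> S \<inter> i \<inter> (S \<inter> j) = {}"
      using comp_disj[OF sym] by blast
  qed
  ultimately show ?thesis by simp
qed

lemma N_k_count:
  assumes sym: "\<forall>x y. E x y \<longrightarrow> E y x" and fin: "finite A" and k: "k \<ge> 1"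
  shows "N_k k E A = card {S. S \<subseteq> A \<and> card S = k \<and> \<not> (\<exists>C\<in>components E A. S \<subseteq> C)}"
proof -
  define K where "K = components E A"
  define L where "L = {l \<in> K \<rightarrow>\<^sub>E {0..<k}. (\<Sum>C\<in>K. l C) = k}"
  define T where "T = {S. S \<subseteq> A \<and> card S = k \<and> \<not> (\<exists>C\<in>K. S \<subseteq> C)}"
  define ls where "ls S = (\<lambda>C\<in>K. card (S \<inter> C))" for S
  define fib where "fib l = {S \<in> T. ls S = l}" for l
  have finK: "finite K" using comp_finite[OF fin] K_def by simp
  have Ksub: "\<And>C. C \<in> K \<Longrightarrow> C \<subseteq> A" unfolding K_def by (rule comp_sub)
  have Kdisj: "\<And>C1 C2. C1 \<in> K \<Longrightarrow> C2 \<in> K \<Longrightarrow> C1 \<noteq> C2 \<Longrightarrow> C1 \<inter> C2 = {}"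
    unfolding K_def by (rule comp_disj[OF sym])
  have KU: "\<Union>K = A" unfolding K_def by (rule comp_union)
  have finL: "finite L"
  proof -
    have "finite (K \<rightarrow>\<^sub>E {0..<k})" using finK by (intro finite_PiE) auto
    then show ?thesis unfolding L_def by (rule finite_subset[rotated]) auto
  qed
  have finT: "finite T" unfolding T_def using fin by (intro finite_subset[OF _ finite_Pow_iff[THEN iffD2, OF fin]]) auto
  have cs: "\<And>S. S \<subseteq> A \<Longrightarrow> card S = (\<Sum>C\<in>K. card (S \<inter> C))"
    unfolding K_def by (rule card_split[OF sym fin])
  have TU: "T = (\<Union>l\<in>L. fib l)"
  proof
    show "T \<subseteq> (\<Union>l\<in>L. fib l)"
    proof
      fix S assume S: "S \<in> T"
      have "ls S \<in> L"
      proof -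
        have "card (S \<inter> C) < k" if "C \<in> K" for C
        proof -
          have fS: "finite S" using S fin finite_subset unfolding T_def by blast
          have "card (S \<inter> C) \<le> card S" using fS by (simp add: card_mono)
          moreover have "card (S \<inter> C) \<noteq> card S"
          proof
            assume "card (S \<inter> C) = card S"
            then have "S \<inter> C = S" using fS by (metis Int_lower1 card_subset_eq)
            then show False using S that unfolding T_def by blast
          qed
          ultimately show ?thesis using S unfolding T_def by simp
        qed
        moreover have "(\<Sum>C\<in>K. ls S C) = k"
        proof -
          have SA: "S \<subseteq> A" "card S = k" using S unfolding T_def by auto
          have "(\<Sum>C\<in>K. ls S C) = (\<Sum>C\<in>K. card (S \<inter> C))" by (rule sum.cong) (auto simp: ls_def)
          also have "\<dots> = card S" using cs[OF SA(1)] by simp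
          finally show ?thesis using SA(2) by simp
        qed
        ultimately show ?thesis unfolding L_def ls_def by auto
      qed
      then show "S \<in> (\<Union>l\<in>L. fib l)" using S unfolding fib_def by blast
    qed
    show "(\<Union>l\<in>L. fib l) \<subseteq> T" unfolding fib_def by blast
  qed
  have cardT: "card T = (\<Sum>l\<in>L. card (fib l))"
    unfolding TU apply (rule card_UN_disjoint[OF finL])
    using finT unfolding fib_def by auto
  have fibc: "card (fib l) = (\<Prod>C\<in>K. card C choose l C)" if lL: "l \<in> L" for l
  proof -
    define P where "P = (\<Pi>\<^sub>E C\<in>K. {B. B \<subseteq> C \<and> card B = l C})"
    define f where "f S = (\<lambda>C\<in>K. S \<inter> C)" for S
    define f' where "f' g = \<Union>(g ` K)" for g :: "'a set \<Rightarrow> 'a set"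
    have lk: "\<And>C. C \<in> K \<Longrightarrow> l C < k" and lsum: "(\<Sum>C\<in>K. l C) = k"
      and lext: "\<And>C. C \<notin> K \<Longrightarrow> l C = undefined" using lL unfolding L_def by auto
    have "bij_betw f (fib l) P"
    proof (rule bij_betw_byWitness[where f'=f'])
      show "\<forall>S\<in>fib l. f' (f S) = S"
      proof
        fix S assume "S \<in> fib l"
        then have "S \<subseteq> A" unfolding fib_def T_def by blast
        then show "f' (f S) = S" unfolding f'_def f_def using KU by auto
      qed
      have inter: "f' g \<inter> C = g C" if "g \<in> P" "C \<in> K" for g C
      proof -
        have "\<And>C'. C' \<in> K \<Longrightarrow> g C' \<subseteq> C'" using that(1) unfolding P_def by auto
        then show ?thesis unfolding f'_def using that Kdisj by blast
      qed
      show "\<forall>g\<in>P. f (f' g) = g"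
      proof
        fix g assume g: "g \<in> P"
        show "f (f' g) = g"
        proof
          fix C show "f (f' g) C = g C"
            using inter[OF g] g unfolding f_def P_def by (cases "C \<in> K") auto
        qed
      qed
      show "f ` fib l \<subseteq> P"
      proof
        fix g assume "g \<in> f ` fib l"
        then obtain S where S: "S \<in> fib l" "g = f S" by blast
        then have "\<And>C. C \<in> K \<Longrightarrow> card (S \<inter> C) = l C" unfolding fib_def ls_def
          by (metis (mono_tags, lifting) mem_Collect_eq restrict_apply')
        then show "g \<in> P" using S unfolding P_def f_def by auto
      qed
      show "f' ` P \<subseteq> fib l"
      proof
        fix S assume "S \<in> f' ` P"
        then obtain g where g: "g \<in> P" "S = f' g" by blast
        have gC: "\<And>C. C \<in> K \<Longrightarrow> g C \<subseteq> C \<and> card (g C) = l C" using g unfolding P_def by auto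
        have SA: "S \<subseteq> A" using g gC KU unfolding f'_def by blast
        have SC: "\<And>C. C \<in> K \<Longrightarrow> card (S \<inter> C) = l C" using inter g gC by simp
        have cardS: "card S = k" using cs[OF SA] SC lsum by simp
        have "\<not> (\<exists>C\<in>K. S \<subseteq> C)"
        proof
          assume "\<exists>C\<in>K. S \<subseteq> C"
          then obtain C where "C \<in> K" "S \<subseteq> C" by blast
          then have "card (S \<inter> C) = k" using cardS by (simp add: Int_absorb2)
          then show False using SC lk \<open>C \<in> K\<close> by fastforce
        qed
        moreover have "ls S = l"
        proof
          fix C show "ls S C = l C" unfolding ls_def using SC lext by (cases "C \<in> K") auto
        qed
        ultimately show "S \<in> fib l" unfolding fib_def T_def using SA cardS by blast
      qed
    qed
    then have "card (fib l) = card P" by (rule bij_betw_same_card)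
    also have "\<dots> = (\<Prod>C\<in>K. card {B. B \<subseteq> C \<and> card B = l C})" unfolding P_def
      using finK by (rule card_PiE)
    also have "\<dots> = (\<Prod>C\<in>K. card C choose l C)"
    proof (rule prod.cong[OF refl])
      fix C assume "C \<in> K"
      then have "finite C" using Ksub[of C] fin finite_subset by blast
      then show "card {B. B \<subseteq> C \<and> card B = l C} = card C choose l C" by (rule n_subsets)
    qed
    finally show ?thesis .
  qed
  have "N_k k E A = (\<Sum>l\<in>L. \<Prod>C\<in>K. card C choose l C)" unfolding N_k_def K_def L_def ..
  also have "\<dots> = (\<Sum>l\<in>L. card (fib l))" using fibc by simp
  also have "\<dots> = card T" using cardT by simp
  finally show ?thesis unfolding T_def K_def .
qed

lemma sym_rtranclp:
  assumes "\<And>x y. R x y \<Longrightarrow> R y x" "R\<^sup>*\<^sup>* a b" shows "R\<^sup>*\<^sup>* b a"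
  using assms(2)
proof (induction rule: rtranclp_induct)
  case base then show ?case by simp
next
  case (step y z) then show ?case
    by (intro converse_rtranclp_into_rtranclp[of _ z y a]) (use assms(1) in auto)
qed

lemma tree_lower:
  assumes fin: "finite W" and ne: "W \<noteq> {}"
    and Fe: "\<forall>e\<in>F. \<exists>x y. e = {x, y} \<and> x \<in> W \<and> y \<in> W"
    and conn: "\<forall>x\<in>W. \<forall>y\<in>W. (\<lambda>a b. {a, b} \<in> F)\<^sup>*\<^sup>* x y"
  shows "card W - 1 \<le> card F"
proof -
  define R where "R = (\<lambda>a b. {a, b} \<in> F)"
  obtain r where r: "r \<in> W" using ne by auto
  have finF: "finite F"
  proof (rule finite_subset[of F "Pow W"])
    show "F \<subseteq> Pow W"
    proof
      fix e assume "e \<in> F"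
      then obtain x y where "e = {x, y}" "x \<in> W" "y \<in> W" using Fe by blast
      then show "e \<in> Pow W" by simp
    qed
    show "finite (Pow W)" using fin by simp
  qed
  have "\<forall>w\<in>W - {r}. \<exists>c. R w c \<and> gdist R c r < gdist R w r"
  proof
    fix w assume w: "w \<in> W - {r}"
    then have "R\<^sup>*\<^sup>* w r" using conn r unfolding R_def by blast
    then obtain c where "R w c" "gdist R c r = gdist R w r - 1" "gdist R w r > 0"
      using gdist_dec_start[of R w r] w by blast
    then show "\<exists>c. R w c \<and> gdist R c r < gdist R w r" by (intro exI[of _ c]) simp
  qed
  then obtain nxt where nxt: "\<And>w. w \<in> W - {r} \<Longrightarrow> R w (nxt w) \<and> gdist R (nxt w) r < gdist R w r"
    by metis
  define g where "g w = {w, nxt w}" for w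
  have inj: "inj_on g (W - {r})"
  proof (rule inj_onI)
    fix w1 w2 assume h: "w1 \<in> W - {r}" "w2 \<in> W - {r}" "g w1 = g w2"
    show "w1 = w2"
    proof (rule ccontr)
      assume ne: "w1 \<noteq> w2"
      have "w1 \<in> {w2, nxt w2}" "w2 \<in> {w1, nxt w1}" using h(3) unfolding g_def by (metis insertI1)+
      then have "w1 = nxt w2" "w2 = nxt w1" using ne by auto
      then show False using nxt[OF h(1)] nxt[OF h(2)] by simp
    qed
  qed
  have "g ` (W - {r}) \<subseteq> F"
  proof
    fix e assume "e \<in> g ` (W - {r})"
    then obtain w where "w \<in> W - {r}" "e = g w" by blast
    then show "e \<in> F" using nxt[of w] unfolding g_def R_def by simp
  qed
  then have "card (W - {r}) \<le> card F" using card_inj_on_le[OF inj _ finF] by blast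
  then show ?thesis using r fin by simp
qed

lemma tree_exists:
  assumes fin: "finite X" and ne: "X \<noteq> {}" and XV: "X \<subseteq> V"
    and conn: "\<forall>x\<in>X. \<forall>y\<in>X. reach_in E X x y" and sym: "\<forall>x y. E x y \<longrightarrow> E y x"
  shows "\<exists>F. connected_subgraph V E X F \<and> card F \<le> card X - 1"
proof -
  define R where "R = rel E X"
  obtain r where r: "r \<in> X" using ne by auto
  have "\<forall>w\<in>X - {r}. \<exists>c. R w c \<and> gdist R c r < gdist R w r"
  proof
    fix w assume w: "w \<in> X - {r}"
    then have "R\<^sup>*\<^sup>* w r" using conn r unfolding R_def reach_rel by blast
    then obtain c where "R w c" "gdist R c r = gdist R w r - 1" "gdist R w r > 0"
      using gdist_dec_start[of R w r] w by blast
    then show "\<exists>c. R w c \<and> gdist R c r < gdist R w r" by (intro exI[of _ c]) simp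
  qed
  then obtain nxt where nxt: "\<And>w. w \<in> X - {r} \<Longrightarrow> R w (nxt w) \<and> gdist R (nxt w) r < gdist R w r"
    by metis
  define g where "g w = {w, nxt w}" for w
  define F where "F = g ` (X - {r})"
  define Fr where "Fr = (\<lambda>a b. {a, b} \<in> F)"
  have cardF: "card F \<le> card X - 1"
  proof -
    have "card F \<le> card (X - {r})" unfolding F_def by (rule card_image_le) (use fin in simp)
    then show ?thesis using r fin by simp
  qed
  have Fe: "\<forall>e\<in>F. \<exists>x y. e = {x, y} \<and> E x y \<and> x \<in> X \<and> y \<in> X"
  proof
    fix e assume "e \<in> F"
    then obtain w where w: "w \<in> X - {r}" "e = {w, nxt w}" unfolding F_def g_def by blast
    then have "E w (nxt w) \<and> w \<in> X \<and> nxt w \<in> X" using nxt[OF w(1)] unfolding R_def rel_def by simp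
    then show "\<exists>x y. e = {x, y} \<and> E x y \<and> x \<in> X \<and> y \<in> X" using w(2) by blast
  qed
  have toR: "\<forall>w. w \<in> X \<longrightarrow> gdist R w r = m \<longrightarrow> Fr\<^sup>*\<^sup>* w r" for m
  proof (induction m rule: less_induct)
    case (less m)
    show ?case
    proof (intro allI impI)
      fix w assume w: "w \<in> X" "gdist R w r = m"
      show "Fr\<^sup>*\<^sup>* w r"
      proof (cases "w = r")
        case True then show ?thesis by simp
      next
        case False
        then have wX: "w \<in> X - {r}" using w by simp
        have n1: "Fr w (nxt w)" unfolding Fr_def F_def g_def using wX by blast
        have n2: "nxt w \<in> X" using nxt[OF wX] unfolding R_def rel_def by blast
        have "Fr\<^sup>*\<^sup>* (nxt w) r" using less.IH[of "gdist R (nxt w) r"] nxt[OF wX] n2 w(2) by blast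
        then show ?thesis by (rule converse_rtranclp_into_rtranclp[where r=Fr, OF n1])
      qed
    qed
  qed
  have Frsym: "\<And>a b. Fr a b \<Longrightarrow> Fr b a" unfolding Fr_def by (simp add: insert_commute)
  have "\<forall>x\<in>X. \<forall>y\<in>X. Fr\<^sup>*\<^sup>* x y"
  proof (intro ballI)
    fix x y assume "x \<in> X" "y \<in> X"
    then have a: "Fr\<^sup>*\<^sup>* x r" and b: "Fr\<^sup>*\<^sup>* y r" using toR by blast+
    have "Fr\<^sup>*\<^sup>* r y" by (rule sym_rtranclp[of Fr, OF Frsym b])
    then show "Fr\<^sup>*\<^sup>* x y" using a by (rule rtranclp_trans[rotated])
  qed
  then have "connected_subgraph V E X F"
    unfolding connected_subgraph_def using XV Fe ne unfolding Fr_def by blast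
  then show ?thesis using cardF by blast
qed

lemma sg_sym: "simple_graph V E \<Longrightarrow> E x y \<Longrightarrow> E y x"
  unfolding simple_graph_def by blast
lemma sg_irr: "simple_graph V E \<Longrightarrow> \<not> E x x"
  unfolding simple_graph_def by blast
lemma sg_in: "simple_graph V E \<Longrightarrow> E x y \<Longrightarrow> x \<in> V \<and> y \<in> V"
  unfolding simple_graph_def by blast
lemma sg_fin: "simple_graph V E \<Longrightarrow> finite V"
  unfolding simple_graph_def by blast
lemma sg_symall: "simple_graph V E \<Longrightarrow> \<forall>x y. E x y \<longrightarrow> E y x"
  unfolding simple_graph_def by blast

lemma hub_conn:
  assumes sym: "\<forall>x y. E x y \<longrightarrow> E y x" and "h \<in> S" and "\<forall>x\<in>S. reach_in E S x h"
  shows "connected_on E S"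
  unfolding connected_on_def
proof (intro conjI ballI)
  show "S \<noteq> {}" using assms(2) by blast
  fix x y assume "x \<in> S" "y \<in> S"
  then have a: "reach_in E S x h" and b: "reach_in E S y h" using assms(3) by blast+
  have "reach_in E S h y" by (rule reach_sym[OF sym b])
  then show "reach_in E S x y" by (rule reach_trans[OF a])
qed

lemma extend_block:
  assumes "simple_graph V E" "biconn_on E T" "T \<subseteq> V"
  shows "\<exists>B. is_block V E B \<and> T \<subseteq> B"
proof -
  define P where "P B = (T \<subseteq> B \<and> B \<subseteq> V \<and> biconn_on E B)" for B
  have fin: "finite V" using sg_fin[OF assms(1)] .
  have "P T" unfolding P_def using assms by blast
  moreover have "\<forall>y. P y \<longrightarrow> card y < Suc (card V)"
    unfolding P_def using card_mono[OF fin] by (simp add: le_imp_less_Suc)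
  ultimately obtain B where B: "P B" "\<forall>y. P y \<longrightarrow> card y \<le> card B"
    using ex_has_greatest_nat[of P T card "Suc (card V)"] by blast
  have "is_block V E B"
    unfolding is_block_def
  proof (intro conjI allI impI)
    show "B \<subseteq> V" "biconn_on E B" using B(1) unfolding P_def by blast+
    fix T' assume h: "B \<subset> T' \<and> T' \<subseteq> V"
    show "\<not> biconn_on E T'"
    proof
      assume "biconn_on E T'"
      then have "P T'" using h B(1) unfolding P_def by blast
      then have "card T' \<le> card B" using B(2) by blast
      moreover have "card B < card T'" using h finite_subset[OF _ fin] by (meson psubset_card_mono)
      ultimately show False by simp
    qed
  qed
  then show ?thesis using B(1) unfolding P_def by blast
qed

lemma block_lemma:
  assumes sg: "simple_graph V E" and bg: "block_graph V E"
    and wa: "E w a" and wb: "E w b" and ab: "a \<noteq> b" and r: "reach_in E (V - {w}) a b"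
  shows "E a b"
proof -
  have sym: "\<forall>x y. E x y \<longrightarrow> E y x" using sg_symall[OF sg] .
  define Q where "Q = rel E (V - {w})"
  have rQ: "reach_in E (V - {w}) = Q\<^sup>*\<^sup>*" unfolding Q_def by (rule reach_rel)
  define da where "da u = gdist Q a u" for u
  define db where "db u = gdist Q u b" for u
  define D where "D = gdist Q a b"
  define I where "I = {u. Q\<^sup>*\<^sup>* a u \<and> Q\<^sup>*\<^sup>* u b \<and> da u + db u = D}"
  define T where "T = insert w I"
  have aV: "a \<in> V - {w}" using sg_in[OF sg wa] sg_irr[OF sg, of w] wa by auto
  have bV: "b \<in> V - {w}" using sg_in[OF sg wb] sg_irr[OF sg, of w] wb by auto
  have Qab: "Q\<^sup>*\<^sup>* a b" using r rQ by simp
  have IV: "I \<subseteq> V - {w}"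
  proof
    fix u assume "u \<in> I"
    then have "reach_in E (V - {w}) a u" unfolding I_def rQ by blast
    then show "u \<in> V - {w}" using reach_in_set aV by metis
  qed
  have wI: "w \<notin> I" using IV by blast
  have aI: "a \<in> I" unfolding I_def da_def db_def D_def using Qab gdist_self[of Q a] by simp
  have bI: "b \<in> I" unfolding I_def da_def db_def D_def using Qab gdist_self[of Q b] by simp
  have QE: "\<And>x y. Q x y \<Longrightarrow> E x y" unfolding Q_def rel_def by simp
  have down: "\<forall>u. u \<in> I \<longrightarrow> da u = m \<longrightarrow> reach_in E (insert u {z\<in>I. da z < da u}) u a" for m
  proof (induction m rule: less_induct)
    case (less m)
    show ?case
    proof (intro allI impI)
      fix u assume u: "u \<in> I" "da u = m"
      show "reach_in E (insert u {z\<in>I. da z < da u}) u a"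
      proof (cases "u = a")
        case True then show ?thesis by simp
      next
        case False
        have au: "Q\<^sup>*\<^sup>* a u" and ub: "Q\<^sup>*\<^sup>* u b" and s: "da u + db u = D" using u unfolding I_def by auto
        obtain c where c: "Q\<^sup>*\<^sup>* a c" "Q c u" "da c = da u - 1" "da u > 0"
          using gdist_dec_end[OF au] False unfolding da_def by metis
        have cb: "Q\<^sup>*\<^sup>* c b" using c(2) ub by (rule converse_rtranclp_into_rtranclp)
        have "db c \<le> Suc (db u)" unfolding db_def by (rule gdist_step_start[OF c(2) ub])
        moreover have "D \<le> da c + db c" unfolding D_def da_def db_def by (rule gdist_tri[OF c(1) cb])
        ultimately have "da c + db c = D" using c(3,4) s by linarith
        then have cI: "c \<in> I" unfolding I_def using c(1) cb by blast
        have "reach_in E (insert c {z\<in>I. da z < da c}) c a"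
          using less.IH[of "da c"] c(3,4) u(2) cI by auto
        then have 1: "reach_in E (insert u {z\<in>I. da z < da u}) c a"
          by (rule reach_mono[rotated]) (use c(3,4) cI in auto)
        have "E u c" using sg_sym[OF sg QE[OF c(2)]] .
        then have "reach_in E (insert u {z\<in>I. da z < da u}) u c"
          by (rule reach_step) (use c(3,4) cI in auto)
        then show ?thesis using 1 by (rule reach_trans)
      qed
    qed
  qed
  have Down: "\<And>u. u \<in> I \<Longrightarrow> reach_in E (insert u {z\<in>I. da z < da u}) u a" using down by blast
  have up: "\<forall>u. u \<in> I \<longrightarrow> db u = m \<longrightarrow> reach_in E (insert u {z\<in>I. da z > da u}) u b" for m
  proof (induction m rule: less_induct)
    case (less m)
    show ?case
    proof (intro allI impI)
      fix u assume u: "u \<in> I" "db u = m"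
      show "reach_in E (insert u {z\<in>I. da z > da u}) u b"
      proof (cases "u = b")
        case True then show ?thesis by simp
      next
        case False
        have au: "Q\<^sup>*\<^sup>* a u" and ub: "Q\<^sup>*\<^sup>* u b" and s: "da u + db u = D" using u unfolding I_def by auto
        obtain c where c: "Q u c" "Q\<^sup>*\<^sup>* c b" "db c = db u - 1" "db u > 0"
          using gdist_dec_start[OF ub] False unfolding db_def by metis
        have ac: "Q\<^sup>*\<^sup>* a c" using au c(1) by (rule rtranclp.rtrancl_into_rtrancl)
        have "da c \<le> Suc (da u)" unfolding da_def by (rule gdist_step_end[OF au c(1)])
        moreover have "D \<le> da c + db c" unfolding D_def da_def db_def by (rule gdist_tri[OF ac c(2)])
        ultimately have e: "da c + db c = D" "da c = Suc (da u)" using c(3,4) s by linarith+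
        then have cI: "c \<in> I" unfolding I_def using ac c(2) by blast
        have "reach_in E (insert c {z\<in>I. da z > da c}) c b"
          using less.IH[of "db c"] c(3,4) u(2) cI by auto
        then have 1: "reach_in E (insert u {z\<in>I. da z > da u}) c b"
          by (rule reach_mono[rotated]) (use e(2) cI in auto)
        have "E u c" using QE[OF c(1)] .
        then have "reach_in E (insert u {z\<in>I. da z > da u}) u c"
          by (rule reach_step) (use e(2) cI in auto)
        then show ?thesis using 1 by (rule reach_trans)
      qed
    qed
  qed
  have Up: "\<And>u. u \<in> I \<Longrightarrow> reach_in E (insert u {z\<in>I. da z > da u}) u b" using up by blast
  have Eaw: "E a w" and Ebw: "E b w" using sg_sym[OF sg wa] sg_sym[OF sg wb] by auto
  have connT: "connected_on E T"
  proof (rule hub_conn[OF sym])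
    show "w \<in> T" unfolding T_def by simp
    show "\<forall>x\<in>T. reach_in E T x w"
    proof
      fix x assume "x \<in> T"
      show "reach_in E T x w"
      proof (cases "x = w")
        case True then show ?thesis by simp
      next
        case False
        then have xI: "x \<in> I" using \<open>x \<in> T\<close> unfolding T_def by blast
        have "reach_in E T x a" by (rule reach_mono[OF _ Down[OF xI]]) (use xI in \<open>auto simp: T_def\<close>)
        moreover have "reach_in E T a w" by (rule reach_step[where E=E, OF Eaw]) (use aI in \<open>auto simp: T_def\<close>)
        ultimately show ?thesis by (rule reach_trans)
      qed
    qed
  qed
  have card1: "card (components E T) = 1" using conn_comps[OF connT] by simp
  have nocut: "\<not> cut_vertex E T v" for v
  proof
    assume cv: "cut_vertex E T v"
    then have vT: "v \<in> T" unfolding cut_vertex_def by blast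
    have "connected_on E (T - {v})"
    proof (cases "v = w")
      case True
      then have TI: "T - {v} = I" unfolding T_def using wI by blast
      show ?thesis unfolding TI
      proof (rule hub_conn[OF sym aI])
        show "\<forall>x\<in>I. reach_in E I x a"
        proof
          fix x assume xI: "x \<in> I"
          show "reach_in E I x a" by (rule reach_mono[OF _ Down[OF xI]]) (use xI in auto)
        qed
      qed
    next
      case False
      note vw = this
      then have vI: "v \<in> I" using vT unfolding T_def by blast
      show ?thesis
      proof (rule hub_conn[OF sym])
        show "w \<in> T - {v}" using False unfolding T_def by blast
        show "\<forall>x\<in>T - {v}. reach_in E (T - {v}) x w"
        proof
          fix x assume xT: "x \<in> T - {v}"
          show "reach_in E (T - {v}) x w"
          proof (cases "x = w")
            case True then show ?thesis by simp
          next
            case False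
            then have xI: "x \<in> I" and xv: "x \<noteq> v" using xT unfolding T_def by blast+
            show ?thesis
            proof (cases "da x \<le> da v")
              case True
              have av: "a \<noteq> v"
              proof
                assume "a = v"
                then have "da x = 0" using True unfolding da_def using gdist_self[of Q a] by simp
                moreover have "Q\<^sup>*\<^sup>* a x" using xI unfolding I_def by blast
                ultimately have "a = x" using gdist_0 unfolding da_def by metis
                then show False using xv \<open>a = v\<close> by simp
              qed
              have "reach_in E (T - {v}) x a"
                by (rule reach_mono[OF _ Down[OF xI]]) (use xI xv True in \<open>auto simp: T_def\<close>)
              moreover have "reach_in E (T - {v}) a w"
                by (rule reach_step[where E=E, OF Eaw]) (use aI av wI vw in \<open>auto simp: T_def\<close>)
              ultimately show ?thesis by (rule reach_trans)
            next
              case False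
              have bv: "b \<noteq> v"
              proof
                assume "b = v"
                then have "da x > da b" using False by simp
                moreover have "da b = D" unfolding da_def D_def ..
                moreover have "da x + db x = D" using xI unfolding I_def by blast
                ultimately show False by simp
              qed
              have "reach_in E (T - {v}) x b"
                by (rule reach_mono[OF _ Up[OF xI]]) (use xI xv False in \<open>auto simp: T_def\<close>)
              moreover have "reach_in E (T - {v}) b w"
                by (rule reach_step[where E=E, OF Ebw]) (use bI bv wI vw in \<open>auto simp: T_def\<close>)
              ultimately show ?thesis by (rule reach_trans)
            qed
          qed
        qed
      qed
    qed
    then have "card (components E (T - {v})) = 1" by (simp add: conn_comps)
    then show False using cv card1 unfolding cut_vertex_def by simp
  qed
  have "biconn_on E T" unfolding biconn_on_def using connT nocut by blast
  moreover have "T \<subseteq> V" unfolding T_def using IV sg_in[OF sg wa] by blast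
  ultimately obtain B where B: "is_block V E B" "T \<subseteq> B" using extend_block[OF sg] by blast
  then have "a \<in> B" "b \<in> B" unfolding T_def using aI bI by blast+
  then show ?thesis using bg B(1) ab unfolding block_graph_def by blast
qed

lemma reachV: "simple_graph V E \<Longrightarrow> reach_in E V = E\<^sup>*\<^sup>*"
proof -
  assume sg: "simple_graph V E"
  have "rel E V = E" unfolding rel_def using sg_in[OF sg] by (intro ext) auto
  then show ?thesis using reach_rel[of E V] by simp
qed

lemma chain:
  assumes sg: "simple_graph V E"
  shows "\<forall>u. u \<in> V \<longrightarrow> E\<^sup>*\<^sup>* u y \<longrightarrow> gdist E u y = m \<longrightarrow>
     reach_in E {v\<in>V. gdist E v y \<le> m} u y"
proof (induction m rule: less_induct)
  case (less m)
  show ?case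
  proof (intro allI impI)
    fix u assume u: "u \<in> V" "E\<^sup>*\<^sup>* u y" "gdist E u y = m"
    show "reach_in E {v\<in>V. gdist E v y \<le> m} u y"
    proof (cases "u = y")
      case True then show ?thesis by simp
    next
      case False
      obtain c where c: "E u c" "E\<^sup>*\<^sup>* c y" "gdist E c y = gdist E u y - 1" "gdist E u y > 0"
        using gdist_dec_start[OF u(2) False] by metis
      have cV: "c \<in> V" using sg_in[OF sg c(1)] by blast
      have "reach_in E {v\<in>V. gdist E v y \<le> gdist E c y} c y"
        using less.IH[of "gdist E c y"] c u(3) cV by auto
      then have 1: "reach_in E {v\<in>V. gdist E v y \<le> m} c y"
        by (rule reach_mono[rotated]) (use c u(3) in auto)
      have "reach_in E {v\<in>V. gdist E v y \<le> m} u c"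
        by (rule reach_step[where E=E, OF c(1)]) (use c u cV in auto)
      then show ?thesis using 1 by (rule reach_trans)
    qed
  qed
qed

lemma geo:
  assumes sg: "simple_graph V E" and bg: "block_graph V E"
    and xw: "E x w" and xy: "E\<^sup>*\<^sup>* x y" and wy: "E\<^sup>*\<^sup>* w y"
    and d: "gdist E x y \<ge> 2" and dw: "gdist E w y = gdist E x y - 1"
  shows "\<not> reach_in E (V - {w}) x y"
proof
  assume r: "reach_in E (V - {w}) x y"
  have sym: "\<forall>x y. E x y \<longrightarrow> E y x" using sg_symall[OF sg] .
  have "w \<noteq> y" using dw d gdist_self[of E y] by auto
  then obtain u where u: "E w u" "E\<^sup>*\<^sup>* u y" "gdist E u y = gdist E w y - 1"
    using gdist_dec_start[OF wy] by metis
  have uV: "u \<in> V" using sg_in[OF sg u(1)] by blast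
  have "reach_in E {v\<in>V. gdist E v y \<le> gdist E u y} u y"
    using chain[OF sg, of y "gdist E u y"] uV u(2) by blast
  then have uy: "reach_in E (V - {w}) u y"
    by (rule reach_mono[rotated]) (use u(3) dw d in auto)
  have "reach_in E (V - {w}) y u" by (rule reach_sym[OF sym uy])
  then have xu: "reach_in E (V - {w}) x u" by (rule reach_trans[OF r])
  have "x \<noteq> u" using u(3) dw d by auto
  then have "E x u" using block_lemma[OF sg bg sg_sym[OF sg xw] u(1) _ xu] by blast
  then have "gdist E x y \<le> Suc (gdist E u y)" using gdist_step_start u(2) by metis
  then show False using u(3) dw d by linarith
qed

definition sepP :: "'a set \<Rightarrow> ('a \<Rightarrow> 'a \<Rightarrow> bool) \<Rightarrow> 'a \<Rightarrow> 'a set \<Rightarrow> bool" where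
  "sepP V E v S \<longleftrightarrow> v \<notin> S \<and> (\<exists>s1\<in>S. \<exists>s2\<in>S. \<not> reach_in E (V - {v}) s1 s2)"

lemma not_sep_aux:
  assumes sg: "simple_graph V E"
    and zX: "z \<in> S \<or> (z \<in> V \<and> sepP V E z S)" and nz: "\<not> reach_in E (V - {w}) z s0" and s0: "s0 \<in> S"
    and allr: "\<forall>s1\<in>S. \<forall>s2\<in>S. reach_in E (V - {w}) s1 s2"
  shows False
proof (cases "z \<in> S")
  case True then show False using allr s0 nz by blast
next
  case False
  then obtain s1 s2 where s: "s1 \<in> S" "s2 \<in> S" "\<not> reach_in E (V - {z}) s1 s2"
    using zX unfolding sepP_def by blast
  have sym: "\<forall>x y. E x y \<longrightarrow> E y x" using sg_symall[OF sg] .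
  have r12: "reach_in E (V - {w}) s1 s2" using allr s by blast
  have "reach_in E ((V - {w}) \<inter> {u. reach_in E (V - {w}) s1 u}) s1 s2"
    by (rule reach_restrict[OF r12])
  moreover have "(V - {w}) \<inter> {u. reach_in E (V - {w}) s1 u} \<subseteq> V - {z}"
  proof
    fix u assume u: "u \<in> (V - {w}) \<inter> {u. reach_in E (V - {w}) s1 u}"
    show "u \<in> V - {z}"
    proof (rule ccontr)
      assume "u \<notin> V - {z}"
      then have "u = z" using u by blast
      then have 1: "reach_in E (V - {w}) s1 z" using u by blast
      have "reach_in E (V - {w}) s0 s1" using allr s0 s(1) by blast
      then have "reach_in E (V - {w}) s0 z" using 1 by (rule reach_trans)
      then have "reach_in E (V - {w}) z s0" by (rule reach_sym[OF sym])
      then show False using nz by simp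
    qed
  qed
  ultimately have "reach_in E (V - {z}) s1 s2" by (rule reach_mono[rotated])
  then show False using s(3) by simp
qed

lemma X_conn:
  assumes sg: "simple_graph V E" and bg: "block_graph V E" and cV: "connected_on E V"
    and SV: "S \<subseteq> V" and Sne: "S \<noteq> {}"
  defines "X \<equiv> S \<union> {v\<in>V. sepP V E v S}"
  shows "\<forall>x\<in>X. \<forall>y\<in>X. reach_in E X x y"
proof (intro ballI)
  fix x y assume xX: "x \<in> X" and yX: "y \<in> X"
  have sym: "\<forall>x y. E x y \<longrightarrow> E y x" using sg_symall[OF sg] .
  have XV: "X \<subseteq> V" unfolding X_def using SV by blast
  have allE: "\<And>a b. a \<in> V \<Longrightarrow> b \<in> V \<Longrightarrow> E\<^sup>*\<^sup>* a b"
    using cV reachV[OF sg] unfolding connected_on_def by metis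
  have main: "\<forall>x. x \<in> X \<longrightarrow> gdist E x y = m \<longrightarrow> reach_in E X x y" for m
  proof (induction m rule: less_induct)
    case (less m)
    show ?case
    proof (intro allI impI)
      fix x assume x: "x \<in> X" "gdist E x y = m"
      have xy: "E\<^sup>*\<^sup>* x y" using allE x(1) yX XV by blast
      show "reach_in E X x y"
      proof (cases "x = y")
        case True then show ?thesis by simp
      next
        case False
        obtain w where w: "E x w" "E\<^sup>*\<^sup>* w y" "gdist E w y = gdist E x y - 1" "gdist E x y > 0"
          using gdist_dec_start[OF xy False] by metis
        show ?thesis
        proof (cases "E x y")
          case True then show ?thesis by (rule reach_step) (use x yX in auto)
        next
          case nE: False
          have d2: "gdist E x y \<ge> 2"
          proof (rule ccontr)
            assume "\<not> gdist E x y \<ge> 2"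
            then have "gdist E x y = 1" using w(4) by simp
            then have "(E ^^ 1) x y" using gdist_pow[OF xy] by metis
            then have "E x y" by (metis relpowp_1)
            then show False using nE by simp
          qed
          have wV: "w \<in> V" using sg_in[OF sg w(1)] by blast
          have sepxy: "\<not> reach_in E (V - {w}) x y" by (rule geo[OF sg bg w(1) xy w(2) d2 w(3)])
          have xw: "x \<noteq> w" using sg_irr[OF sg] w(1) by blast
          have yw: "y \<noteq> w" using w(3) d2 gdist_self[of E y] by auto
          have wX: "w \<in> X"
          proof (cases "w \<in> S")
            case True then show ?thesis unfolding X_def by blast
          next
            case wS: False
            have "sepP V E w S"
              unfolding sepP_def
            proof (intro conjI)
              show "w \<notin> S" by (rule wS)
              show "\<exists>s1\<in>S. \<exists>s2\<in>S. \<not> reach_in E (V - {w}) s1 s2"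
              proof (rule ccontr)
                assume "\<not> (\<exists>s1\<in>S. \<exists>s2\<in>S. \<not> reach_in E (V - {w}) s1 s2)"
                then have allr: "\<forall>s1\<in>S. \<forall>s2\<in>S. reach_in E (V - {w}) s1 s2" by blast
                obtain s0 where s0: "s0 \<in> S" using Sne by auto
                have "\<not> reach_in E (V - {w}) x s0 \<or> \<not> reach_in E (V - {w}) y s0"
                proof (rule ccontr)
                  assume "\<not> (\<not> reach_in E (V - {w}) x s0 \<or> \<not> reach_in E (V - {w}) y s0)"
                  then have a: "reach_in E (V - {w}) x s0" and b: "reach_in E (V - {w}) y s0" by auto
                  have "reach_in E (V - {w}) s0 y" by (rule reach_sym[OF sym b])
                  then have "reach_in E (V - {w}) x y" by (rule reach_trans[OF a])
                  then show False using sepxy by simp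
                qed
                moreover have "x \<in> S \<or> (x \<in> V \<and> sepP V E x S)" using x(1) unfolding X_def by blast
                moreover have "y \<in> S \<or> (y \<in> V \<and> sepP V E y S)" using yX unfolding X_def by blast
                ultimately show False using not_sep_aux[OF sg _ _ s0 allr] by metis
              qed
            qed
            then show ?thesis unfolding X_def using wV by blast
          qed
          have "reach_in E X x w" by (rule reach_step[where E=E, OF w(1)]) (use x wX in auto)
          moreover have "reach_in E X w y" using less.IH[of "gdist E w y"] w x(2) wX by auto
          ultimately show ?thesis by (rule reach_trans)
        qed
      qed
    qed
  qed
  then show "reach_in E X x y" using xX by blast
qed

lemma sep_in_W:
  assumes sg: "simple_graph V E" and cs: "connected_subgraph V E W F" and SW: "S \<subseteq> W"
    and sp: "sepP V E v S"
  shows "v \<in> W"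
proof (rule ccontr)
  assume vW: "v \<notin> W"
  obtain s1 s2 where s: "s1 \<in> S" "s2 \<in> S" "\<not> reach_in E (V - {v}) s1 s2"
    using sp unfolding sepP_def by blast
  have WV: "W \<subseteq> V" and Fe: "\<forall>e\<in>F. \<exists>x y. e = {x, y} \<and> E x y \<and> x \<in> W \<and> y \<in> W"
    and conn: "\<forall>x\<in>W. \<forall>y\<in>W. (\<lambda>a b. {a, b} \<in> F)\<^sup>*\<^sup>* x y"
    using cs unfolding connected_subgraph_def by blast+
  have edge: "rel E (V - {v}) a b" if "{a, b} \<in> F" for a b
  proof -
    have "\<exists>x y. {a, b} = {x, y} \<and> E x y \<and> x \<in> W \<and> y \<in> W" using bspec[OF Fe that] .
    then obtain x y where xy: "{a, b} = {x, y}" "E x y" "x \<in> W" "y \<in> W" by metis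
    then have "(a = x \<and> b = y) \<or> (a = y \<and> b = x)" by (simp add: doubleton_eq_iff)
    then have "E a b \<and> a \<in> W \<and> b \<in> W" using xy(2-4) sg_sym[OF sg, of x y] by auto
    then show ?thesis unfolding rel_def using WV vW by blast
  qed
  have p: "(\<lambda>a b. {a, b} \<in> F)\<^sup>*\<^sup>* s1 s2" using conn s SW by blast
  have "(rel E (V - {v}))\<^sup>*\<^sup>* s1 s2"
    using p
  proof (induction rule: rtranclp_induct)
    case base then show ?case by simp
  next
    case (step y z) show ?case by (rule rtranclp.rtrancl_into_rtrancl[OF step.IH edge[OF step.hyps(2)]])
  qed
  then show False using s(3) reach_rel[of E "V - {v}"] by simp
qed

lemma sdist:
  assumes sg: "simple_graph V E" and bg: "block_graph V E" and cV: "connected_on E V"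
    and SV: "S \<subseteq> V" and Sne: "S \<noteq> {}"
  shows "steiner_dist V E S = card (S \<union> {v\<in>V. sepP V E v S}) - 1"
proof -
  define X where "X = S \<union> {v\<in>V. sepP V E v S}"
  have fin: "finite V" using sg_fin[OF sg] .
  have XV: "X \<subseteq> V" unfolding X_def using SV by blast
  have finX: "finite X" using finite_subset[OF XV fin] .
  have Xne: "X \<noteq> {}" unfolding X_def using Sne by blast
  have connX: "\<forall>x\<in>X. \<forall>y\<in>X. reach_in E X x y" unfolding X_def by (rule X_conn[OF sg bg cV SV Sne])
  obtain F0 where F0: "connected_subgraph V E X F0" "card F0 \<le> card X - 1"
    using tree_exists[OF finX Xne XV connX sg_symall[OF sg]] by blast
  define P where "P m = (\<exists>W F. connected_subgraph V E W F \<and> S \<subseteq> W \<and> card F = m)" for m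
  have low: "card X - 1 \<le> m" if "P m" for m
  proof -
    obtain W F where WF: "connected_subgraph V E W F" "S \<subseteq> W" "card F = m" using \<open>P m\<close> unfolding P_def by blast
    have WV: "W \<subseteq> V" and Wne: "W \<noteq> {}" and Fe: "\<forall>e\<in>F. \<exists>x y. e = {x, y} \<and> E x y \<and> x \<in> W \<and> y \<in> W"
      and conn: "\<forall>x\<in>W. \<forall>y\<in>W. (\<lambda>a b. {a, b} \<in> F)\<^sup>*\<^sup>* x y"
      using WF(1) unfolding connected_subgraph_def by blast+
    have finW: "finite W" using finite_subset[OF WV fin] .
    have Fe': "\<forall>e\<in>F. \<exists>x y. e = {x, y} \<and> x \<in> W \<and> y \<in> W" using Fe by blast
    have "card W - 1 \<le> card F" by (rule tree_lower[OF finW Wne Fe' conn])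
    moreover have "X \<subseteq> W" unfolding X_def using WF(2) sep_in_W[OF sg WF(1) WF(2)] by blast
    then have "card X \<le> card W" using finW by (rule card_mono[rotated])
    ultimately show ?thesis using WF(3) by linarith
  qed
  have "P (card F0)" unfolding P_def using F0(1) X_def by blast
  then have "Least P \<le> card F0" by (rule Least_le)
  moreover have "P (Least P)" using \<open>P (card F0)\<close> by (rule LeastI)
  then have "card X - 1 \<le> Least P" by (rule low)
  ultimately have "Least P = card X - 1" using F0(2) by linarith
  moreover have "steiner_dist V E S = Least P" unfolding steiner_dist_def P_def ..
  ultimately show ?thesis unfolding X_def by simp
qed

lemma sum_card_swap:
  assumes "finite A" "finite B"
  shows "(\<Sum>S\<in>A. card {v\<in>B. P v S}) = (\<Sum>v\<in>B. card {S\<in>A. P v S})"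
proof -
  have 1: "card {v\<in>B. P v S} = (\<Sum>v\<in>B. if P v S then 1 else 0)" for S
    using sum.inter_filter[OF assms(2), of "\<lambda>_. 1::nat" "\<lambda>v. P v S"] by simp
  have 2: "card {S\<in>A. P v S} = (\<Sum>S\<in>A. if P v S then 1 else 0)" for v
    using sum.inter_filter[OF assms(1), of "\<lambda>_. 1::nat" "\<lambda>S. P v S"] by simp
  show ?thesis unfolding 1 2 by (rule sum.swap)
qed

theorem mainTheorem4:
  fixes V :: "'a set" and E :: "'a \<Rightarrow> 'a \<Rightarrow> bool" and n k :: nat
  assumes "simple_graph V E"
    and "connected_on E V"
    and "block_graph V E"
    and "card V = n"
    and "2 \<le> k" and "k \<le> n"
  shows "steiner_wiener k V E
           = (\<Sum>v\<in>{v\<in>V. cut_vertex E V v}. N_k k E (V - {v})) + (k - 1) * (n choose k)"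
proof -
  note sg = assms(1) and cV = assms(2) and bg = assms(3)
  have fin: "finite V" using sg_fin[OF sg] .
  have sym: "\<forall>x y. E x y \<longrightarrow> E y x" using sg_symall[OF sg] .
  define Sk where "Sk = {S. S \<subseteq> V \<and> card S = k}"
  have "Sk \<subseteq> Pow V" unfolding Sk_def by blast
  then have finSk: "finite Sk" using fin by (simp add: finite_subset)
  have cardSk: "card Sk = n choose k" unfolding Sk_def using n_subsets[OF fin] assms(4) by simp
  have sd: "steiner_dist V E S = (k - 1) + card {v\<in>V. sepP V E v S}" if "S \<in> Sk" for S
  proof -
    have SV: "S \<subseteq> V" and cS: "card S = k" using that unfolding Sk_def by auto
    have Sne: "S \<noteq> {}" using cS assms(5) by auto
    have finS: "finite S" using finite_subset[OF SV fin] .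
    have "S \<inter> {v\<in>V. sepP V E v S} = {}" unfolding sepP_def by blast
    moreover have "finite {v\<in>V. sepP V E v S}" using fin by simp
    ultimately have "card (S \<union> {v\<in>V. sepP V E v S}) = card S + card {v\<in>V. sepP V E v S}"
      using finS by (simp add: card_Un_disjoint)
    then show ?thesis using sdist[OF sg bg cV SV Sne] cS assms(5) by simp
  qed
  have "steiner_wiener k V E = (\<Sum>S\<in>Sk. (k - 1) + card {v\<in>V. sepP V E v S})"
    unfolding steiner_wiener_def Sk_def[symmetric] using sd by (rule sum.cong[OF refl])
  also have "\<dots> = (k - 1) * card Sk + (\<Sum>S\<in>Sk. card {v\<in>V. sepP V E v S})"
    by (simp add: sum.distrib)
  also have "(\<Sum>S\<in>Sk. card {v\<in>V. sepP V E v S}) = (\<Sum>v\<in>V. card {S\<in>Sk. sepP V E v S})"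
    by (rule sum_card_swap[OF finSk fin])
  also have "\<dots> = (\<Sum>v\<in>V. if cut_vertex E V v then N_k k E (V - {v}) else 0)"
  proof (rule sum.cong[OF refl])
    fix v assume vV: "v \<in> V"
    have eq: "{S\<in>Sk. sepP V E v S} = {S. S \<subseteq> V - {v} \<and> card S = k \<and> \<not> (\<exists>C\<in>components E (V - {v}). S \<subseteq> C)}"
    proof (rule set_eqI)
      fix S
      show "S \<in> {S\<in>Sk. sepP V E v S} \<longleftrightarrow> S \<in> {S. S \<subseteq> V - {v} \<and> card S = k \<and> \<not> (\<exists>C\<in>components E (V - {v}). S \<subseteq> C)}"
      proof (cases "S \<subseteq> V - {v} \<and> card S = k")
        case True
        then have Sne: "S \<noteq> {}" using assms(5) by auto
        have "(\<exists>C\<in>components E (V - {v}). S \<subseteq> C) \<longleftrightarrow> (\<forall>s1\<in>S. \<forall>s2\<in>S. reach_in E (V - {v}) s1 s2)"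
          using single_comp_iff[OF sym _ Sne] True by blast
        then show ?thesis using True unfolding Sk_def sepP_def by auto
      next
        case False
        then show ?thesis unfolding Sk_def sepP_def by auto
      qed
    qed
    show "card {S\<in>Sk. sepP V E v S} = (if cut_vertex E V v then N_k k E (V - {v}) else 0)"
    proof (cases "cut_vertex E V v")
      case True
      have "N_k k E (V - {v}) = card {S. S \<subseteq> V - {v} \<and> card S = k \<and> \<not> (\<exists>C\<in>components E (V - {v}). S \<subseteq> C)}"
        by (rule N_k_count[OF sym]) (use fin assms(5) in auto)
      then show ?thesis using True eq by simp
    next
      case False
      have "card (components E V) = 1" using conn_comps[OF cV] by simp
      then have "card (components E (V - {v})) \<le> 1" using False vV unfolding cut_vertex_def by simp
      then have allr: "\<forall>x\<in>V - {v}. \<forall>y\<in>V - {v}. reach_in E (V - {v}) x y"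
        using noncut_reach[of "V - {v}"] fin by blast
      have "{S\<in>Sk. sepP V E v S} = {}" unfolding sepP_def Sk_def using allr by blast
      then have "card {S\<in>Sk. sepP V E v S} = 0" by (simp only: card.empty)
      then show ?thesis using False by simp
    qed
  qed
  also have "\<dots> = (\<Sum>v\<in>{v\<in>V. cut_vertex E V v}. N_k k E (V - {v}))"
    by (rule sum.inter_filter[OF fin, symmetric])
  finally show ?thesis using cardSk by simp
qed

end
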